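(* Let $(X,d)$ be a metric space, $\mu$ a non-atomic Borel measure on $X$, $\beta>0$, and let $\Gamma^*\subset\Gamma^\mu$ be a family of paths closed under taking non-trivial subpaths that has the $\mu$-arc-chord property with exponent $\beta$. Then every Lipschitz-$\beta$ function $f:X\to\mathbb R$ (i.e. $|f(x)-f(y)|\le L\,d(x,y)^\beta$ for all $x,y$, for some $L$) is absolutely continuous over every path of $\Gamma^*$: for every $\gamma\in\Gamma^*$ with $\mu$-arc length parametrization $\gamma_h:[0,h]\to X$, the function $f\circ\gamma_h$ is absolutely continuous on $[0,h]$.
   Context: A path is a continuous map $\gamma:[a,b]\to X$; a subpath is a restriction to a subinterval, trivial if that interval is a point; $\mathrm{Im}(\gamma)=\gamma([a,b])$. $\mu$ non-atomic: $\mu(\{x\})=0$ for all $x$. $\Gamma^\mu$ is the set of all non-trivial injective paths $\gamma$ with $0<\mu(\mathrm{Im}(\tilde\gamma))<\infty$ for every non-trivial subpath $\tilde\gamma$. For $\gamma:[a,b]\to X$ in $\Gamma^\mu$, $h=\mu(\mathrm{Im}(\gamma))$, $\nu_\gamma(x)=\mu(\gamma([a,x]))$ is a bijection $[a,b]\to[0,h]$, and $\gamma_h=\gamma\circ\nu_\gamma^{-1}$. $\Gamma^*$ has the $\mu$-arc-chord property with exponent $\beta$ if there is $C_\mu>0$ with $\mathrm{diam}(\mathrm{Im}(\gamma))^\beta\le C_\mu\,\mu(\mathrm{Im}(\gamma))$ for all $\gamma\in\Gamma^*$. *)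

theory Defs
  imports "HOL-Analysis.Analysis"
begin

text \<open>A path is represented by a triple (g, a, b) with a \<le> b and g continuous on [a,b];
  only the values of g on [a,b] matter.\<close>

definition is_path :: "(real \<Rightarrow> 'a::topological_space) \<times> real \<times> real \<Rightarrow> bool" where
  "is_path p = (case p of (g, a, b) \<Rightarrow> a \<le> b \<and> continuous_on {a..b} g)"

definition path_image3 :: "(real \<Rightarrow> 'a) \<times> real \<times> real \<Rightarrow> 'a set" where
  "path_image3 p = (case p of (g, a, b) \<Rightarrow> g ` {a..b})"

definition nontrivial_path :: "(real \<Rightarrow> 'a::topological_space) \<times> real \<times> real \<Rightarrow> bool" where
  "nontrivial_path p = (is_path p \<and> fst (snd p) < snd (snd p))"

definition subpath3 :: "(real \<Rightarrow> 'a) \<times> real \<times> real \<Rightarrow> (real \<Rightarrow> 'a) \<times> real \<times> real \<Rightarrow> bool" where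
  "subpath3 q p = (case p of (g, a, b) \<Rightarrow> case q of (g', c, d) \<Rightarrow>
      a \<le> c \<and> c \<le> d \<and> d \<le> b \<and> (\<forall>t\<in>{c..d}. g' t = g t))"

definition non_atomic :: "'a measure \<Rightarrow> bool" where
  "non_atomic M = (\<forall>x. {x} \<in> sets M \<and> emeasure M {x} = 0)"

definition Gamma_mu :: "'a::topological_space measure \<Rightarrow> ((real \<Rightarrow> 'a) \<times> real \<times> real) set" where
  "Gamma_mu M = {p. nontrivial_path p \<and> inj_on (fst p) {fst (snd p)..snd (snd p)} \<and>
      (\<forall>q. subpath3 q p \<and> nontrivial_path q \<longrightarrow>
         0 < emeasure M (path_image3 q) \<and> emeasure M (path_image3 q) < \<infinity>)}"

text \<open>\<mu>-arc length function \<nu>_\<gamma>(x) = \<mu>(\<gamma>([a,x])) and parametrization \<gamma>_h = \<gamma> \<circ> \<nu>_\<gamma>^{-1}.\<close>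
definition mu_len :: "'a measure \<Rightarrow> (real \<Rightarrow> 'a) \<times> real \<times> real \<Rightarrow> real \<Rightarrow> real" where
  "mu_len M p x = (case p of (g, a, b) \<Rightarrow> measure M (g ` {a..x}))"

definition mu_param :: "'a measure \<Rightarrow> (real \<Rightarrow> 'a) \<times> real \<times> real \<Rightarrow> real \<Rightarrow> 'a" where
  "mu_param M p = (case p of (g, a, b) \<Rightarrow> g \<circ> inv_into {a..b} (mu_len M p))"

definition closed_under_subpaths :: "((real \<Rightarrow> 'a::topological_space) \<times> real \<times> real) set \<Rightarrow> bool" where
  "closed_under_subpaths G = (\<forall>p\<in>G. \<forall>q. subpath3 q p \<and> nontrivial_path q \<longrightarrow> q \<in> G)"

definition mu_arc_chord :: "'a::metric_space measure \<Rightarrow> real \<Rightarrow> ((real \<Rightarrow> 'a) \<times> real \<times> real) set \<Rightarrow> bool" where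
  "mu_arc_chord M \<beta> G = (\<exists>C>0. \<forall>p\<in>G.
      diameter (path_image3 p) powr \<beta> \<le> C * measure M (path_image3 p))"

definition lipschitz_beta :: "real \<Rightarrow> ('a::metric_space \<Rightarrow> real) \<Rightarrow> bool" where
  "lipschitz_beta \<beta> f = (\<exists>L. \<forall>x y. \<bar>f x - f y\<bar> \<le> L * dist x y powr \<beta>)"

definition abs_continuous_on :: "real set \<Rightarrow> (real \<Rightarrow> real) \<Rightarrow> bool" where
  "abs_continuous_on S g = (\<forall>\<epsilon>>0. \<exists>\<delta>>0. \<forall>(n::nat) (u::nat\<Rightarrow>real) v.
      (\<forall>i<n. u i \<le> v i \<and> {u i..v i} \<subseteq> S) \<and>
      (\<forall>i<n. \<forall>j<n. i \<noteq> j \<longrightarrow> v i \<le> u j \<or> v j \<le> u i) \<and>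
      (\<Sum>i<n. v i - u i) < \<delta> \<longrightarrow> (\<Sum>i<n. \<bar>g (v i) - g (u i)\<bar>) < \<epsilon>)"

end

theory Submission
  imports Defs
begin

lemma shrink_to_point:
  fixes x y :: real
  assumes "\<And>n::nat. \<bar>y - x\<bar> \<le> 1 / (real n + 1)"
  shows "y = x"
proof (rule ccontr)
  assume "y \<noteq> x"
  then have "\<bar>y - x\<bar> > 0" by simp
  then obtain n where "inverse (real (Suc n)) < \<bar>y - x\<bar>"
    using reals_Archimedean by blast
  with assms[of n] show False by (simp add: field_simps)
qed

lemma lip_abs_cont:
  fixes F :: "real \<Rightarrow> real"
  assumes K: "K \<ge> 0"
    and L: "\<And>u v. 0 \<le> u \<Longrightarrow> u \<le> v \<Longrightarrow> v \<le> h \<Longrightarrow> \<bar>F v - F u\<bar> \<le> K * (v - u)"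
  shows "abs_continuous_on {0..h} F"
  unfolding abs_continuous_on_def
proof (intro allI impI)
  fix e :: real assume e: "e > 0"
  show "\<exists>\<delta>>0. \<forall>(n::nat) (u::nat\<Rightarrow>real) v.
      (\<forall>i<n. u i \<le> v i \<and> {u i..v i} \<subseteq> {0..h}) \<and>
      (\<forall>i<n. \<forall>j<n. i \<noteq> j \<longrightarrow> v i \<le> u j \<or> v j \<le> u i) \<and>
      (\<Sum>i<n. v i - u i) < \<delta> \<longrightarrow> (\<Sum>i<n. \<bar>F (v i) - F (u i)\<bar>) < e"
  proof (intro exI[of _ "e / (K + 1)"] conjI allI impI)
    show "e / (K + 1) > 0" using e K by simp
    fix n :: nat and u v :: "nat \<Rightarrow> real"
    assume H: "(\<forall>i<n. u i \<le> v i \<and> {u i..v i} \<subseteq> {0..h}) \<and>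
      (\<forall>i<n. \<forall>j<n. i \<noteq> j \<longrightarrow> v i \<le> u j \<or> v j \<le> u i) \<and>
      (\<Sum>i<n. v i - u i) < e / (K + 1)"
    have "(\<Sum>i<n. \<bar>F (v i) - F (u i)\<bar>) \<le> (\<Sum>i<n. K * (v i - u i))"
    proof (rule sum_mono)
      fix i assume "i \<in> {..<n}"
      with H have "u i \<le> v i" "{u i..v i} \<subseteq> {0..h}" by auto
      then have "0 \<le> u i" "v i \<le> h" by auto
      then show "\<bar>F (v i) - F (u i)\<bar> \<le> K * (v i - u i)" using L \<open>u i \<le> v i\<close> by blast
    qed
    also have "\<dots> = K * (\<Sum>i<n. v i - u i)" by (simp add: sum_distrib_left)
    also have "\<dots> \<le> K * (e / (K + 1))" using H K by (intro mult_left_mono) auto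
    also have "\<dots> < e" using e K by (simp add: field_simps)
    finally show "(\<Sum>i<n. \<bar>F (v i) - F (u i)\<bar>) < e" .
  qed
qed

theorem lemma5p2:
  fixes M :: "'a::metric_space measure" and \<beta> :: real
    and G :: "((real \<Rightarrow> 'a) \<times> real \<times> real) set" and f :: "'a \<Rightarrow> real"
  assumes "sets M = sets borel"
    and "non_atomic M"
    and "\<beta> > 0"
    and "G \<subseteq> Gamma_mu M"
    and "closed_under_subpaths G"
    and "mu_arc_chord M \<beta> G"
    and "lipschitz_beta \<beta> f"
    and "p \<in> G"
  shows "abs_continuous_on {0..measure M (path_image3 p)} (f \<circ> mu_param M p)"
proof -
  note sM = assms(1)
  obtain g a b where p: "p = (g, a, b)" by (metis prod_cases3)
  have pG: "p \<in> Gamma_mu M" using assms(4,8) by blast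
  then have ab: "a < b" and cont: "continuous_on {a..b} g" and inj: "inj_on g {a..b}"
    and sub0: "\<forall>q. subpath3 q (g,a,b) \<and> nontrivial_path q \<longrightarrow>
         0 < emeasure M (path_image3 q) \<and> emeasure M (path_image3 q) < \<infinity>"
  proof -
    have "nontrivial_path (g,a,b) \<and> inj_on g {a..b} \<and> (\<forall>q. subpath3 q (g,a,b) \<and> nontrivial_path q \<longrightarrow>
         0 < emeasure M (path_image3 q) \<and> emeasure M (path_image3 q) < \<infinity>)"
      using pG unfolding Gamma_mu_def p by simp
    then show "a < b" "continuous_on {a..b} g" "inj_on g {a..b}"
      "\<forall>q. subpath3 q (g,a,b) \<and> nontrivial_path q \<longrightarrow>
         0 < emeasure M (path_image3 q) \<and> emeasure M (path_image3 q) < \<infinity>"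
      by (auto simp: nontrivial_path_def is_path_def)
  qed
  have sub: "0 < emeasure M (g ` {s..t}) \<and> emeasure M (g ` {s..t}) < \<infinity>"
    if "a \<le> s" "s < t" "t \<le> b" for s t
  proof -
    have "subpath3 (g,s,t) (g,a,b) \<and> nontrivial_path (g,s,t)"
      using that cont by (auto simp: subpath3_def nontrivial_path_def is_path_def intro: continuous_on_subset)
    then show ?thesis using sub0 by (auto simp: path_image3_def)
  qed
  have pt0: "emeasure M {z} = 0" "{z} \<in> sets M" for z
    using assms(2) by (auto simp: non_atomic_def)
  have mpt0: "measure M {z} = 0" for z using pt0 by (simp add: measure_def)
  have meas: "g ` {s..t} \<in> sets M" if "a \<le> s" "t \<le> b" for s t
  proof -
    have "continuous_on {s..t} g" using cont that by (auto intro: continuous_on_subset)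
    then have "compact (g ` {s..t})" by (intro compact_continuous_image) auto
    then have "closed (g ` {s..t})" by (rule compact_imp_closed)
    then show ?thesis using sM by simp
  qed
  have fin: "emeasure M (g ` {s..t}) < \<infinity>" if "a \<le> s" "t \<le> b" for s t
  proof (cases "s < t")
    case True then show ?thesis using sub that by blast
  next
    case False
    then have "{s..t} = {} \<or> {s..t} = {s}" by auto
    then show ?thesis using pt0 by auto
  qed
  have fm: "g ` {s..t} \<in> fmeasurable M" if "a \<le> s" "t \<le> b" for s t
    using meas[OF that] fin[OF that] by (rule fmeasurableI)
  define \<nu> where "\<nu> x = measure M (g ` {a..x})" for x
  have add: "\<nu> t = \<nu> s + measure M (g ` {s..t})" if "a \<le> s" "s \<le> t" "t \<le> b" for s t
  proof -
    have "{a..t} = {a..s} \<union> {s..t}" using that by auto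
    then have U: "g ` {a..t} = g ` {a..s} \<union> g ` {s..t}" by (simp add: image_Un)
    have I: "g ` {a..s} \<inter> g ` {s..t} = {g s}"
    proof
      show "g ` {a..s} \<inter> g ` {s..t} \<subseteq> {g s}"
      proof
        fix z assume "z \<in> g ` {a..s} \<inter> g ` {s..t}"
        then obtain x y where "x \<in> {a..s}" "y \<in> {s..t}" "z = g x" "z = g y" by auto
        then have "x = y" using inj that by (auto dest: inj_onD)
        then show "z \<in> {g s}" using \<open>x \<in> {a..s}\<close> \<open>y \<in> {s..t}\<close> \<open>z = g x\<close> by auto
      qed
    qed (use that in auto)
    have "\<nu> t = measure M (g ` {a..s}) + measure M (g ` {s..t}) - measure M {g s}"
      unfolding \<nu>_def U using measure_Un3[OF fm fm, of a s s t] that I by simp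
    then show ?thesis using mpt0 by (simp add: \<nu>_def)
  qed
  have \<nu>a: "\<nu> a = 0" using mpt0 by (simp add: \<nu>_def)
  have posm: "measure M (g ` {s..t}) > 0" if "a \<le> s" "s < t" "t \<le> b" for s t
    using sub[OF that] by (simp add: measure_def enn2real_positive_iff less_top)
  have smono: "\<nu> s < \<nu> t" if "a \<le> s" "s < t" "t \<le> b" for s t
    using add[of s t] posm[OF that] that by simp
  have \<nu>cont: "continuous_on {a..b} \<nu>"
    unfolding continuous_on_iff
  proof (intro ballI allI impI)
    fix x e :: real assume x: "x \<in> {a..b}" and e: "e > 0"
    define I where "I n = {max a (x - 1/(real n+1)) .. min b (x + 1/(real n+1))}" for n :: nat
    define A where "A n = g ` I n" for n
    have IA: "A n = g ` {max a (x - 1/(real n+1)) .. min b (x + 1/(real n+1))}" for n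
      by (simp add: A_def I_def)
    have Asets: "range A \<subseteq> sets M" unfolding IA using meas by auto
    have Afin: "emeasure M (A n) \<noteq> \<infinity>" for n unfolding IA using fin by (simp add: less_top)
    have Idec: "I (Suc n) \<subseteq> I n" for n
    proof -
      have "1/(real (Suc n)+1) \<le> 1/(real n+1)" by (simp add: frac_le)
      then show ?thesis unfolding I_def by auto
    qed
    have Adec: "decseq A"
      by (rule decseq_SucI) (use Idec in \<open>auto simp: A_def\<close>)
    have Isub: "I n \<subseteq> {a..b}" for n unfolding I_def by auto
    have IInt: "(\<Inter>n. I n) = {x}"
    proof
      show "{x} \<subseteq> (\<Inter>n. I n)" using x by (auto simp: I_def)
      show "(\<Inter>n. I n) \<subseteq> {x}"
      proof
        fix y assume "y \<in> (\<Inter>n. I n)"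
        then have yI: "y \<in> I n" for n by auto
        have "\<bar>y - x\<bar> \<le> 1 / (real n + 1)" for n
        proof -
          have "x - 1/(real n+1) \<le> y" "y \<le> x + 1/(real n+1)"
            using yI[of n] unfolding I_def by auto
          then show ?thesis by (simp add: abs_le_iff)
        qed
        then show "y \<in> {x}" using shrink_to_point by auto
      qed
    qed
    have "(\<Inter>n. A n) = g ` (\<Inter>n. I n)"
      unfolding A_def using image_INT[OF inj, of UNIV I] Isub by auto
    then have AInt: "(\<Inter>n. A n) = {g x}" using IInt by simp
    have "(\<lambda>n. measure M (A n)) \<longlonglongrightarrow> 0"
      using Lim_measure_decseq[OF Asets Adec Afin] AInt mpt0 by simp
    then obtain n where n: "measure M (A n) < e"
      using e by (auto dest!: order_tendstoD(2)[of _ 0 _ e] simp: eventually_sequentially) blast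
    show "\<exists>d>0. \<forall>x'\<in>{a..b}. dist x' x < d \<longrightarrow> dist (\<nu> x') (\<nu> x) < e"
    proof (intro exI[of _ "1/(real n+1)"] conjI ballI impI)
      show "1/(real n+1) > 0" by simp
      fix x' assume x': "x' \<in> {a..b}" and d: "dist x' x < 1/(real n+1)"
      have "\<bar>\<nu> x' - \<nu> x\<bar> = measure M (g ` {min x x'..max x x'})"
        using add[of x x'] add[of x' x] x x' by (cases "x \<le> x'") (auto simp: min_def max_def)
      also have "\<dots> \<le> measure M (A n)"
      proof (rule measure_mono_fmeasurable)
        show "g ` {min x x'..max x x'} \<subseteq> A n"
          unfolding A_def I_def using x x' d by (intro image_mono) (auto simp: dist_real_def)
        show "g ` {min x x'..max x x'} \<in> sets M" using meas x x' by auto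
        show "A n \<in> fmeasurable M" unfolding IA by (rule fm) auto
      qed
      finally show "dist (\<nu> x') (\<nu> x) < e" using n by (simp add: dist_real_def)
    qed
  qed
  have h: "measure M (path_image3 p) = \<nu> b" by (simp add: p path_image3_def \<nu>_def)
  have mp: "mu_param M p = g \<circ> inv_into {a..b} \<nu>"
  proof -
    have "mu_len M p = \<nu>" by (rule ext) (simp add: mu_len_def p \<nu>_def)
    then show ?thesis by (simp add: mu_param_def p)
  qed
  define \<sigma> where "\<sigma> = inv_into {a..b} \<nu>"
  have \<sigma>: "\<sigma> u \<in> {a..b} \<and> \<nu> (\<sigma> u) = u" if u0: "0 \<le> u" "u \<le> \<nu> b" for u
  proof -
    obtain s where "a \<le> s" "s \<le> b" "\<nu> s = u"
      using IVT'[of \<nu> a u b] \<nu>cont \<nu>a u0 ab by auto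
    then have "u \<in> \<nu> ` {a..b}" by auto
    then show ?thesis unfolding \<sigma>_def using inv_into_into[of u \<nu> "{a..b}"] f_inv_into_f[of u \<nu> "{a..b}"] by blast
  qed
  obtain C where C: "C > 0" "\<And>q. q \<in> G \<Longrightarrow> diameter (path_image3 q) powr \<beta> \<le> C * measure M (path_image3 q)"
    using assms(6) by (auto simp: mu_arc_chord_def)
  obtain L where L: "\<And>x y. \<bar>f x - f y\<bar> \<le> L * dist x y powr \<beta>"
    using assms(7) by (auto simp: lipschitz_beta_def)
  define K where "K = max L 0 * C"
  show ?thesis unfolding h mp \<sigma>_def[symmetric]
  proof (rule lip_abs_cont[of K])
    show "K \<ge> 0" using C by (simp add: K_def)
    fix u v assume uv: "0 \<le> u" "u \<le> v" "v \<le> \<nu> b"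
    define s where "s = \<sigma> u"
    define t where "t = \<sigma> v"
    have s: "s \<in> {a..b}" "\<nu> s = u" using \<sigma>[of u] uv by (auto simp: s_def)
    have t: "t \<in> {a..b}" "\<nu> t = v" using \<sigma>[of v] uv by (auto simp: t_def)
    have st: "s \<le> t"
    proof (rule ccontr)
      assume "\<not> s \<le> t"
      then have "\<nu> t < \<nu> s" using smono[of t s] s t by auto
      then show False using s t uv by simp
    qed
    show "\<bar>(f \<circ> (g \<circ> \<sigma>)) v - (f \<circ> (g \<circ> \<sigma>)) u\<bar> \<le> K * (v - u)"
    proof (cases "s = t")
      case True
      then show ?thesis using uv \<open>K \<ge> 0\<close> by (simp add: s_def t_def)
    next
      case False
      then have slt: "s < t" using st by simp
      define q where "q = (g, s, t)"
      have "subpath3 q p \<and> nontrivial_path q"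
        using s t slt cont unfolding q_def p
        by (auto simp: subpath3_def nontrivial_path_def is_path_def intro: continuous_on_subset)
      then have qG: "q \<in> G"
        using assms(5,8) unfolding closed_under_subpaths_def by blast
      have bd: "bounded (g ` {s..t})"
        using cont s t by (intro compact_imp_bounded compact_continuous_image continuous_on_subset[OF cont]) auto
      have "dist (g t) (g s) \<le> diameter (g ` {s..t})"
        using slt by (intro diameter_bounded_bound[OF bd]) auto
      then have "dist (g t) (g s) powr \<beta> \<le> diameter (g ` {s..t}) powr \<beta>"
        using assms(3) by (intro powr_mono2) auto
      also have "\<dots> \<le> C * measure M (g ` {s..t})"
        using C(2)[OF qG] by (simp add: q_def path_image3_def)
      also have "\<dots> = C * (v - u)" using add[of s t] s t st by simp
      finally have D: "dist (g t) (g s) powr \<beta> \<le> C * (v - u)" .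
      have "\<bar>f (g t) - f (g s)\<bar> \<le> L * dist (g t) (g s) powr \<beta>" by (rule L)
      also have "\<dots> \<le> max L 0 * dist (g t) (g s) powr \<beta>"
        by (intro mult_right_mono) auto
      also have "\<dots> \<le> max L 0 * (C * (v - u))"
        by (intro mult_left_mono D) auto
      finally show ?thesis by (simp add: K_def s_def t_def mult.assoc)
    qed
  qed
qed

end
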